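(* Under the hypotheses of Proposition 3 (two-system setup with a steady-state map $x_2^s$ defined on all of $\mathbb{R}^{n_1}$; $f_1,f_2$ globally Lipschitz; symmetric positive definite $P_1,Q_1,P_2,Q_2$ with $P_1\nabla_{x_1}f_1^r(x_1)+\nabla_{x_1}f_1^r(x_1)^TP_1\preceq -Q_1$ and $P_2\nabla_{x_2}f_2(x_1,x_2)+\nabla_{x_2}f_2(x_1,x_2)^TP_2\preceq -Q_2$ for all $x_1,x_2$), for $\theta>0$ define $$V(x_1,x_2)=\|f_1^r(x_1)\|_{P_1}^2+\theta\,\|f_2(x_1,x_2)\|_{P_2}^2 .$$ Then there exists $\nu>0$, independent of $\theta$, such that for every $\theta>0$ and all $(x_1,x_2)$, the derivative of $V$ along the predictive-sensitivity vector field satisfies $$\dot V(x_1,x_2)\le -\begin{bmatrix}\|f_2(x_1,x_2)\|_{P_2}\\ \|f_1^r(x_1)\|_{P_1}\end{bmatrix}^T\begin{bmatrix}\frac{\theta\lambda_{\min}(Q_2)}{\|P_2\|_2} & -\nu\\ -\nu & \frac{\lambda_{\min}(Q_1)}{\|P_1\|_2}\end{bmatrix}\begin{bmatrix}\|f_2(x_1,x_2)\|_{P_2}\\ \|f_1^r(x_1)\|_{P_1}\end{bmatrix}.$$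
   Context: Two-system setup: Let $f_1:\mathbb{R}^{n_1}\times\mathbb{R}^{n_2}\to\mathbb{R}^{n_1}$ and $f_2:\mathbb{R}^{n_1}\times\mathbb{R}^{n_2}\to\mathbb{R}^{n_2}$ be continuously differentiable, and assume $\nabla_{x_2}f_2(x_1,x_2)$ is invertible for all $(x_1,x_2)$. Define the extended sensitivity $S_{x_1}^{x_2}(x_1,x_2):=-\nabla_{x_2}f_2(x_1,x_2)^{-1}\nabla_{x_1}f_2(x_1,x_2)\in\mathbb{R}^{n_2\times n_1}$. The predictive-sensitivity system is $\dot x_1=f_1(x_1,x_2)$, $\dot x_2=f_2(x_1,x_2)+S_{x_1}^{x_2}(x_1,x_2)f_1(x_1,x_2)$; it is assumed that this right-hand side is locally Lipschitz continuous. A steady-state map is a continuously differentiable map $x_2^s$ with $f_2(x_1,x_2^s(x_1))=0$. The reduced vector field is $f_1^r(x_1):=f_1(x_1,x_2^s(x_1))$, with Jacobian $\nabla_{x_1}f_1^r(x_1)=\nabla_{x_1}f_1(x_1,x_2^s(x_1))+\nabla_{x_2}f_1(x_1,x_2^s(x_1))\nabla_{x_1}x_2^s(x_1)$. $\|x\|_P^2=x^TPx$, $\|P\|_2=\lambda_{\max}(P)$, $\lambda_{\min}$ the smallest eigenvalue. $\dot V=\nabla V^T F$ where $F$ is the predictive-sensitivity vector field. *)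

theory Defs
  imports "HOL-Analysis.Analysis"
begin

definition pnorm :: "real^'n^'n \<Rightarrow> real^'n \<Rightarrow> real" where
  "pnorm P x = sqrt (x \<bullet> (P *v x))"

text \<open>Real eigenvalues of a square matrix (for symmetric matrices these are all eigenvalues).\<close>
definition eigenvalues :: "real^'n^'n \<Rightarrow> real set" where
  "eigenvalues A = {l. \<exists>v. v \<noteq> 0 \<and> A *v v = l *\<^sub>R v}"

definition lambda_min :: "real^'n^'n \<Rightarrow> real" where
  "lambda_min A = Min (eigenvalues A)"

definition lambda_max :: "real^'n^'n \<Rightarrow> real" where
  "lambda_max A = Max (eigenvalues A)"

text \<open>Spectral norm of a symmetric positive definite matrix, as in the paper: its largest eigenvalue.\<close>
definition norm2_spd :: "real^'n^'n \<Rightarrow> real" where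
  "norm2_spd P = lambda_max P"

definition sym_pos_def :: "real^'n^'n \<Rightarrow> bool" where
  "sym_pos_def P \<longleftrightarrow> transpose P = P \<and> (\<forall>x. x \<noteq> 0 \<longrightarrow> 0 < x \<bullet> (P *v x))"

definition loewner_le :: "real^'n^'n \<Rightarrow> real^'n^'n \<Rightarrow> bool" where
  "loewner_le A B \<longleftrightarrow> (\<forall>v. v \<bullet> (A *v v) \<le> v \<bullet> (B *v v))"

end

theory Submission
  imports Defs
begin


lemma neg_mv: "(- A) *v x = - (A *v (x::real^'n))"
  by (simp add: matrix_vector_mult_def vec_eq_iff sum_negf)

lemma transp_dot: "x \<bullet> (transpose J *v w) = (J *v (x::real^'n)) \<bullet> (w::real^'m)"
  by (metis dot_lmul_matrix vector_transpose_matrix)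

lemma sym_dot: "transpose P = P \<Longrightarrow> x \<bullet> (P *v y) = y \<bullet> (P *v (x::real^'n))"
  by (metis transp_dot inner_commute)

lemma quad_form:
  assumes "transpose P = P"
  shows "v \<bullet> ((P ** J + transpose J ** P) *v v) = 2 * (v \<bullet> (P *v (J *v (v::real^'n))))"
proof -
  have "v \<bullet> ((transpose J ** P) *v v) = (J *v v) \<bullet> (P *v v)"
    by (metis matrix_vector_mul_assoc transp_dot)
  also have "\<dots> = v \<bullet> (P *v (J *v v))" using sym_dot[OF assms] by (metis)
  finally show ?thesis
    by (simp add: matrix_vector_mult_add_rdistrib inner_add_right flip: matrix_vector_mul_assoc)
qed

lemma rayleigh:
  fixes A :: "real^'n^'n"
  assumes sym: "transpose A = A"
  shows "\<exists>m v. v \<noteq> 0 \<and> A *v v = m *\<^sub>R v \<and> (\<forall>x. m * (norm x)\<^sup>2 \<le> x \<bullet> (A *v x))"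
proof -
  let ?q = "\<lambda>x::real^'n. x \<bullet> (A *v x)"
  have "continuous_on (sphere 0 1) ?q" by (intro continuous_intros)
  then obtain v where v: "v \<in> sphere 0 1" and vmin: "\<And>y. y \<in> sphere 0 1 \<Longrightarrow> ?q v \<le> ?q y"
    using continuous_attains_inf[of "sphere (0::real^'n) 1" ?q] by auto
  define m where "m = ?q v"
  have nv: "norm v = 1" using v by simp
  have qge: "m * (norm x)\<^sup>2 \<le> ?q x" for x
  proof (cases "x = 0")
    case True then show ?thesis by simp
  next
    case False
    define u where "u = (1 / norm x) *\<^sub>R x"
    have "u \<in> sphere 0 1" using False by (simp add: u_def)
    then have "m \<le> ?q u" using vmin m_def by auto
    also have "?q u = ?q x / (norm x)\<^sup>2"
      by (simp add: u_def matrix_vector_mult_scaleR power2_eq_square)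
    finally show ?thesis using False by (simp add: field_simps)
  qed
  define B where "B = A - m *\<^sub>R mat 1"
  have Bv: "B *v x = A *v x - m *\<^sub>R x" for x
    by (simp add: B_def matrix_vector_mult_diff_rdistrib flip: scaleR_matrix_vector_assoc)
  have Bsym: "y \<bullet> (B *v x) = x \<bullet> (B *v y)" for x y
    using sym_dot[OF sym] by (simp add: Bv inner_diff_right inner_commute)
  have Bpos: "0 \<le> x \<bullet> (B *v x)" for x
    using qge[of x] by (simp add: Bv inner_diff_right power2_norm_eq_inner)
  have Bv0: "v \<bullet> (B *v v) = 0"
    using nv by (simp add: Bv inner_diff_right power2_norm_eq_inner[symmetric] m_def)
  define w where "w = B *v v"
  define c where "c = w \<bullet> w"
  define d where "d = w \<bullet> (B *v w)"
  have exp: "(v + t *\<^sub>R w) \<bullet> (B *v (v + t *\<^sub>R w)) = 2 * t * c + t\<^sup>2 * d" for t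
  proof -
    have "(v + t *\<^sub>R w) \<bullet> (B *v (v + t *\<^sub>R w)) =
        v \<bullet> (B *v v) + t * (v \<bullet> (B *v w)) + t * (w \<bullet> (B *v v)) + t*t * (w \<bullet> (B *v w))"
      by (simp add: matrix_vector_right_distrib matrix_vector_mult_scaleR inner_add_left inner_add_right algebra_simps)
    also have "v \<bullet> (B *v w) = w \<bullet> (B *v v)" using Bsym by metis
    finally show ?thesis using Bv0 by (simp add: c_def d_def w_def power2_eq_square)
  qed
  have "c = 0"
  proof (rule ccontr)
    assume "c \<noteq> 0"
    then have cp: "c > 0" by (simp add: c_def)
    define t where "t = - c / (\<bar>d\<bar> + 1)"
    have "0 \<le> 2 * t * c + t\<^sup>2 * d" using Bpos[of "v + t *\<^sub>R w"] exp by simp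
    moreover have "2 * t * c + t\<^sup>2 * d < 0"
    proof -
      have "t\<^sup>2 * d \<le> t\<^sup>2 * \<bar>d\<bar>" by (simp add: mult_left_mono)
      also have "t\<^sup>2 * \<bar>d\<bar> = c * c * \<bar>d\<bar> / (\<bar>d\<bar> + 1)^2"
        by (simp add: t_def power2_eq_square)
      also have "\<dots> = (c * c / (\<bar>d\<bar>+1)) * (\<bar>d\<bar> / (\<bar>d\<bar>+1))"
        by (simp add: power2_eq_square)
      also have "\<dots> < (c * c / (\<bar>d\<bar>+1)) * 1"
        apply (rule mult_strict_left_mono) using cp by auto
      also have "\<dots> = c * c / (\<bar>d\<bar>+1)" by simp
      finally have "t\<^sup>2 * d < c * c / (\<bar>d\<bar>+1)" .
      moreover have "2 * t * c = - 2 * (c * c / (\<bar>d\<bar>+1))" by (simp add: t_def)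
      moreover have "0 < c * c / (\<bar>d\<bar>+1)" using cp by simp
      ultimately show ?thesis by linarith
    qed
    ultimately show False by simp
  qed
  then have "w = 0" by (simp add: c_def)
  then have "A *v v = m *\<^sub>R v" by (simp add: w_def Bv)
  moreover have "v \<noteq> 0" using nv by auto
  ultimately show ?thesis using qge by blast
qed



lemma eig_finite:
  fixes A :: "real^'n^'n"
  assumes sym: "transpose A = A"
  shows "finite (eigenvalues A)"
proof -
  let ?E = "eigenvalues A"
  define ev where "ev l = (SOME v. v \<noteq> 0 \<and> A *v v = l *\<^sub>R v)" for l
  have ev: "ev l \<noteq> 0 \<and> A *v ev l = l *\<^sub>R ev l" if "l \<in> ?E" for l
    using that unfolding ev_def eigenvalues_def by (metis (mono_tags, lifting) mem_Collect_eq someI_ex)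
  have inj: "inj_on ev ?E"
  proof (rule inj_onI)
    fix l l' assume l: "l \<in> ?E" "l' \<in> ?E" "ev l = ev l'"
    then have "l *\<^sub>R ev l = l' *\<^sub>R ev l" using ev by metis
    then show "l = l'" using ev[OF l(1)] by (simp add: scaleR_cancel_right)
  qed
  have orth: "pairwise orthogonal (ev ` ?E)"
  proof (clarsimp simp: pairwise_def)
    fix l l' assume l: "l \<in> ?E" "l' \<in> ?E" "ev l \<noteq> ev l'"
    then have ne: "l \<noteq> l'" by auto
    have "l * (ev l \<bullet> ev l') = (A *v ev l) \<bullet> ev l'" using ev[OF l(1)] by simp
    also have "\<dots> = ev l \<bullet> (A *v ev l')" using sym_dot[OF sym] by (metis inner_commute)
    also have "\<dots> = l' * (ev l \<bullet> ev l')" using ev[OF l(2)] by simp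
    finally show "orthogonal (ev l) (ev l')" using ne by (simp add: orthogonal_def)
  qed
  have "0 \<notin> ev ` ?E" using ev by auto
  then have "independent (ev ` ?E)" using orth pairwise_orthogonal_independent by blast
  then have "finite (ev ` ?E)" using independent_bound by blast
  then show ?thesis using inj finite_imageD by blast
qed

lemma lmin:
  fixes A :: "real^'n^'n"
  assumes sym: "transpose A = A"
  shows "lambda_min A \<in> eigenvalues A" "\<And>x. lambda_min A * (norm x)\<^sup>2 \<le> x \<bullet> (A *v x)"
proof -
  from rayleigh[OF sym] obtain m v where v1: "v \<noteq> 0" and v2: "A *v v = m *\<^sub>R v"
    and q: "\<forall>x. m * (norm x)\<^sup>2 \<le> x \<bullet> (A *v x)"
    by blast
  have mE: "m \<in> eigenvalues A" unfolding eigenvalues_def using v1 v2 by blast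
  have mle: "m \<le> l" if "l \<in> eigenvalues A" for l
  proof -
    from that obtain w where w1: "w \<noteq> 0" and w2: "A *v w = l *\<^sub>R w"
      unfolding eigenvalues_def by blast
    have "w \<bullet> (A *v w) = l * (norm w)\<^sup>2" using w2 by (simp add: power2_norm_eq_inner)
    then have "m * (norm w)\<^sup>2 \<le> l * (norm w)\<^sup>2" using q by metis
    moreover have "0 < (norm w)\<^sup>2" using w1 by simp
    ultimately show ?thesis by (rule mult_right_le_imp_le)
  qed
  have "lambda_min A = m" unfolding lambda_min_def
    apply (rule Min_eqI)
    using eig_finite[OF sym] mE mle by auto
  then show "lambda_min A \<in> eigenvalues A" "\<And>x. lambda_min A * (norm x)\<^sup>2 \<le> x \<bullet> (A *v x)"
    using mE q by auto
qed

lemma lmax: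
  fixes A :: "real^'n^'n"
  assumes sym: "transpose A = A"
  shows "x \<bullet> (A *v x) \<le> lambda_max A * (norm x)\<^sup>2"
proof -
  have "transpose (-A) = - transpose A" by (simp add: transpose_def vec_eq_iff)
  then have sym': "transpose (-A) = -A" using sym by simp
  obtain m v where v: "v \<noteq> 0" "(-A) *v v = m *\<^sub>R v" and q: "\<And>x. m * (norm x)\<^sup>2 \<le> x \<bullet> ((-A) *v x)"
    using rayleigh[OF sym'] by blast
  have "A *v v = - ((-A) *v v)" by (simp add: neg_mv)
  then have "A *v v = (-m) *\<^sub>R v" using v(2) by simp
  then have mE: "-m \<in> eigenvalues A" using v unfolding eigenvalues_def by blast
  then have "-m \<le> lambda_max A" unfolding lambda_max_def using eig_finite[OF sym] by simp
  moreover have "x \<bullet> (A *v x) \<le> (-m) * (norm x)\<^sup>2" using q[of x] by (simp add: neg_mv)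
  moreover have "(-m) * (norm x)\<^sup>2 \<le> lambda_max A * (norm x)\<^sup>2"
    by (rule mult_right_mono[OF calculation(1) zero_le_power2])
  ultimately show ?thesis by linarith
qed

lemma spd_facts:
  fixes A :: "real^'n^'n"
  assumes "sym_pos_def A"
  shows "transpose A = A" "0 < lambda_min A" "lambda_min A \<le> lambda_max A"
    "\<And>x. lambda_min A * (norm x)\<^sup>2 \<le> x \<bullet> (A *v x)"
    "\<And>x. x \<bullet> (A *v x) \<le> lambda_max A * (norm x)\<^sup>2"
    "\<And>x. (pnorm A x)\<^sup>2 = x \<bullet> (A *v x)"
proof -
  show sym: "transpose A = A" using assms by (simp add: sym_pos_def_def)
  obtain v where v: "v \<noteq> 0" "A *v v = lambda_min A *\<^sub>R v"
    using lmin(1)[OF sym] unfolding eigenvalues_def by blast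
  have "0 < v \<bullet> (A *v v)" using assms v(1) unfolding sym_pos_def_def by blast
  moreover have "v \<bullet> (A *v v) = lambda_min A * (v \<bullet> v)" using v by simp
  moreover have "0 < v \<bullet> v" using v by simp
  ultimately show pos: "0 < lambda_min A"
    by (auto simp: zero_less_mult_iff)
  show "\<And>x. lambda_min A * (norm x)\<^sup>2 \<le> x \<bullet> (A *v x)" by (rule lmin(2)[OF sym])
  show "\<And>x. x \<bullet> (A *v x) \<le> lambda_max A * (norm x)\<^sup>2" by (rule lmax[OF sym])
  have "lambda_min A * (norm v)\<^sup>2 \<le> lambda_max A * (norm v)\<^sup>2"
    using lmin(2)[OF sym, of v] lmax[OF sym, of v] by linarith
  then show "lambda_min A \<le> lambda_max A" using v by simp
  show "(pnorm A x)\<^sup>2 = x \<bullet> (A *v x)" for x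
  proof -
    have "0 \<le> lambda_min A * (norm x)\<^sup>2" using pos by simp
    then have "0 \<le> x \<bullet> (A *v x)" using lmin(2)[OF sym, of x] by linarith
    then show ?thesis by (simp add: pnorm_def)
  qed
qed

lemma lip_deriv_bound:
  fixes f :: "'a::real_normed_vector \<Rightarrow> 'b::real_normed_vector"
  assumes L: "L-lipschitz_on UNIV f" and d: "(f has_derivative f') (at x)"
  shows "norm (f' h) \<le> L * norm h"
proof (cases "h = 0")
  case True
  have "linear f'" using d has_derivative_linear by blast
  then show ?thesis using True linear_0 by (simp add: linear_0)
next
  case False
  have L0: "0 \<le> L" using L lipschitz_on_nonneg by blast
  have bl: "bounded_linear f'" using d has_derivative_bounded_linear by blast
  have "norm (f' h) \<le> (L + e) * norm h" if e: "e > 0" for e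
  proof -
    have "\<forall>e>0. \<exists>d>0. \<forall>y. norm (y - x) < d \<longrightarrow> norm (f y - f x - f' (y - x)) \<le> e * norm (y - x)"
      using d unfolding has_derivative_at_alt by simp
    from this[rule_format, OF e] obtain dl where dl0: "dl > 0" and
      dl1: "\<forall>y. norm (y - x) < dl \<longrightarrow> norm (f y - f x - f' (y - x)) \<le> e * norm (y - x)"
      by blast
    have dl: "dl > 0" "\<And>y. norm (y - x) < dl \<Longrightarrow> norm (f y - f x - f' (y - x)) \<le> e * norm (y - x)"
      using dl0 dl1 by auto
    define t where "t = dl / (2 * norm h)"
    have tp: "t > 0" using dl False by (simp add: t_def)
    have "norm ((x + t *\<^sub>R h) - x) < dl" using tp False dl by (simp add: t_def)
    then have 1: "norm (f (x + t *\<^sub>R h) - f x - f' (t *\<^sub>R h)) \<le> e * (t * norm h)"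
      using dl(2)[of "x + t *\<^sub>R h"] tp by simp
    have 2: "norm (f (x + t *\<^sub>R h) - f x) \<le> L * (t * norm h)"
      using lipschitz_onD[OF L, of "x + t *\<^sub>R h" x] tp by (simp add: dist_norm)
    have "f' (t *\<^sub>R h) = t *\<^sub>R f' h" by (rule linear_scale[OF has_derivative_linear[OF d]])
    then have "t * norm (f' h) = norm (f' (t *\<^sub>R h))" using tp by simp
    also have "\<dots> \<le> norm (f (x + t *\<^sub>R h) - f x) + norm (f (x + t *\<^sub>R h) - f x - f' (t *\<^sub>R h))"
      using norm_triangle_ineq4[of "f (x + t *\<^sub>R h) - f x" "f (x + t *\<^sub>R h) - f x - f' (t *\<^sub>R h)"] by simp
    also have "\<dots> \<le> t * ((L + e) * norm h)" using 1 2 by (simp add: algebra_simps)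
    finally show ?thesis using tp by simp
  qed
  note * = this
  have hp: "norm h > 0" using False by simp
  show ?thesis
  proof (rule field_le_epsilon)
    fix e :: real assume "0 < e"
    then have "norm (f' h) \<le> (L + e / norm h) * norm h" using * hp by simp
    then show "norm (f' h) \<le> L * norm h + e" using hp by (simp add: algebra_simps)
  qed
qed



lemma mv_neg_right: "A *v (- x) = - (A *v (x::real^'n))"
  by (simp add: matrix_vector_mult_def vec_eq_iff sum_negf)

theorem lemma2:
  fixes f1 :: "real^'n1 \<Rightarrow> real^'n2 \<Rightarrow> real^'n1"
    and f2 :: "real^'n1 \<Rightarrow> real^'n2 \<Rightarrow> real^'n2"
    and J11 :: "real^'n1 \<Rightarrow> real^'n2 \<Rightarrow> real^'n1^'n1"
    and J12 :: "real^'n1 \<Rightarrow> real^'n2 \<Rightarrow> real^'n2^'n1"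
    and J21 :: "real^'n1 \<Rightarrow> real^'n2 \<Rightarrow> real^'n1^'n2"
    and J22 :: "real^'n1 \<Rightarrow> real^'n2 \<Rightarrow> real^'n2^'n2"
    and xs :: "real^'n1 \<Rightarrow> real^'n2"
    and Dxs :: "real^'n1 \<Rightarrow> real^'n1^'n2"
    and P1 Q1 :: "real^'n1^'n1"
    and P2 Q2 :: "real^'n2^'n2"
  assumes f1_deriv: "\<And>x1 x2. ((\<lambda>p. f1 (fst p) (snd p)) has_derivative
              (\<lambda>h. J11 x1 x2 *v fst h + J12 x1 x2 *v snd h)) (at (x1, x2))"
    and f2_deriv: "\<And>x1 x2. ((\<lambda>p. f2 (fst p) (snd p)) has_derivative
              (\<lambda>h. J21 x1 x2 *v fst h + J22 x1 x2 *v snd h)) (at (x1, x2))"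
    and J_cont: "continuous_on UNIV (\<lambda>p. J11 (fst p) (snd p))"
                "continuous_on UNIV (\<lambda>p. J12 (fst p) (snd p))"
                "continuous_on UNIV (\<lambda>p. J21 (fst p) (snd p))"
                "continuous_on UNIV (\<lambda>p. J22 (fst p) (snd p))"
    and J22_inv: "\<And>x1 x2. invertible (J22 x1 x2)"
    and PS_loclip: "local_lipschitz UNIV UNIV
              (\<lambda>(t::real) p. (f1 (fst p) (snd p),
                 f2 (fst p) (snd p) +
                 ((- matrix_inv (J22 (fst p) (snd p))) ** J21 (fst p) (snd p)) *v f1 (fst p) (snd p)))"
    and xs_deriv: "\<And>x1. (xs has_derivative (\<lambda>h. Dxs x1 *v h)) (at x1)"
    and Dxs_cont: "continuous_on UNIV Dxs"
    and xs_steady: "\<And>x1. f2 x1 (xs x1) = 0"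
    and f1_lip: "\<exists>L. lipschitz_on L UNIV (\<lambda>p. f1 (fst p) (snd p))"
    and f2_lip: "\<exists>L. lipschitz_on L UNIV (\<lambda>p. f2 (fst p) (snd p))"
    and P1: "sym_pos_def P1" and Q1: "sym_pos_def Q1"
    and P2: "sym_pos_def P2" and Q2: "sym_pos_def Q2"
    and LMI1: "\<And>x1. loewner_le
              (P1 ** (J11 x1 (xs x1) + J12 x1 (xs x1) ** Dxs x1)
               + transpose (J11 x1 (xs x1) + J12 x1 (xs x1) ** Dxs x1) ** P1) (- Q1)"
    and LMI2: "\<And>x1 x2. loewner_le (P2 ** J22 x1 x2 + transpose (J22 x1 x2) ** P2) (- Q2)"
  shows "\<exists>\<nu>>0. \<forall>\<theta>>0. \<forall>x1 x2 D.
           ((\<lambda>p. (pnorm P1 (f1 (fst p) (xs (fst p))))\<^sup>2 + \<theta> * (pnorm P2 (f2 (fst p) (snd p)))\<^sup>2)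
              has_derivative D) (at (x1, x2)) \<longrightarrow>
           D (f1 x1 x2, f2 x1 x2 + ((- matrix_inv (J22 x1 x2)) ** J21 x1 x2) *v f1 x1 x2)
           \<le> - (let a = pnorm P2 (f2 x1 x2); b = pnorm P1 (f1 x1 (xs x1)) in
                  (\<theta> * lambda_min Q2 / norm2_spd P2) * a\<^sup>2 - 2 * \<nu> * a * b
                  + (lambda_min Q1 / norm2_spd P1) * b\<^sup>2)"
proof -
  obtain L1 where L1: "L1-lipschitz_on UNIV (\<lambda>p. f1 (fst p) (snd p))" using f1_lip by blast
  obtain L2 where L2: "L2-lipschitz_on UNIV (\<lambda>p. f2 (fst p) (snd p))" using f2_lip by blast
  have L10: "0 \<le> L1" using L1 lipschitz_on_nonneg by blast
  have L20: "0 \<le> L2" using L2 lipschitz_on_nonneg by blast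
  note P1f = spd_facts[OF P1] and P2f = spd_facts[OF P2] and Q1f = spd_facts[OF Q1] and Q2f = spd_facts[OF Q2]
  have bJ11: "norm (J11 a b *v u) \<le> L1 * norm u" for a b u
    using lip_deriv_bound[OF L1 f1_deriv[of a b], of "(u,0)"] by (simp add: norm_Pair)
  have bJ12: "norm (J12 a b *v u) \<le> L1 * norm u" for a b u
    using lip_deriv_bound[OF L1 f1_deriv[of a b], of "(0,u)"] by (simp add: norm_Pair)
  have bJ21: "norm (J21 a b *v u) \<le> L2 * norm u" for a b u
    using lip_deriv_bound[OF L2 f2_deriv[of a b], of "(u,0)"] by (simp add: norm_Pair)
  obtain cP1 where cP1: "cP1 > 0" "\<And>x. norm (P1 *v x) \<le> norm x * cP1"
    using bounded_linear.pos_bounded[OF matrix_vector_mul_bounded_linear[of P1]] by blast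
  obtain cP2 where cP2: "cP2 > 0" "\<And>x. norm (P2 *v x) \<le> norm x * cP2"
    using bounded_linear.pos_bounded[OF matrix_vector_mul_bounded_linear[of P2]] by blast
  define q2 where "q2 = lambda_min Q2"
  have q2: "0 < q2" "\<And>x. q2 * (norm x)\<^sup>2 \<le> x \<bullet> (Q2 *v x)"
    using Q2f unfolding q2_def by auto
  define k where "k = 2 * cP2 / q2"
  have kp: "0 < k" using cP2 q2 by (simp add: k_def)
  have key22: "2 * (w \<bullet> (P2 *v (J22 a b *v w))) \<le> - (w \<bullet> (Q2 *v w))" for a b w
    using LMI2[of a b] quad_form[OF P2f(1), where J="J22 a b" and v=w] unfolding loewner_le_def
    by (metis neg_mv inner_minus_right)
  have CS: "- (u \<bullet> (P *v v)) \<le> norm u * (norm v * c)" if "\<And>x. norm (P *v x) \<le> norm x * c"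
    for u v :: "real^'m" and P c
  proof -
    have "- (u \<bullet> (P *v v)) \<le> norm u * norm (P *v v)"
      using Cauchy_Schwarz_ineq2[of u "P *v v"] by linarith
    also have "\<dots> \<le> norm u * (norm v * c)" using that[of v] by (simp add: mult_left_mono)
    finally show ?thesis .
  qed
  have J22low: "norm w \<le> k * norm (J22 a b *v w)" for a b w
  proof (cases "w = 0")
    case True then show ?thesis using kp by simp
  next
    case False
    have "q2 * (norm w)\<^sup>2 \<le> - 2 * (w \<bullet> (P2 *v (J22 a b *v w)))"
      using key22[of w a b] q2(2)[of w] by linarith
    also have "\<dots> \<le> 2 * (norm w * (norm (J22 a b *v w) * cP2))"
      using CS[OF cP2(2), of w "J22 a b *v w"] by linarith
    finally have "norm w * (q2 * norm w) \<le> norm w * (2 * cP2 * norm (J22 a b *v w))"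
      by (simp add: power2_eq_square algebra_simps)
    then have "q2 * norm w \<le> 2 * cP2 * norm (J22 a b *v w)" using False by simp
    then show ?thesis using q2(1) by (simp add: k_def field_simps)
  qed
  have chain: "((\<lambda>y. g (fst (y, xs y)) (snd (y, xs y))) has_derivative
       (\<lambda>h. A a (xs a) *v h + B a (xs a) *v (Dxs a *v h))) (at a)"
    if "\<And>x1 x2. ((\<lambda>p. g (fst p) (snd p)) has_derivative
              (\<lambda>h. A x1 x2 *v fst h + B x1 x2 *v snd h)) (at (x1, x2))"
    for g :: "real^'n1 \<Rightarrow> real^'n2 \<Rightarrow> real^'k" and A B a
  proof -
    have d1: "((\<lambda>y. (y, xs y)) has_derivative (\<lambda>h. (h, Dxs a *v h))) (at a)"
      by (intro has_derivative_Pair has_derivative_ident xs_deriv)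
    show ?thesis using has_derivative_compose[OF d1 that[of a "xs a"]] by simp
  qed
  have Dxs_eq: "J21 a (xs a) *v u + J22 a (xs a) *v (Dxs a *v u) = 0" for a u
  proof -
    have "((\<lambda>y. f2 y (xs y)) has_derivative
       (\<lambda>h. J21 a (xs a) *v h + J22 a (xs a) *v (Dxs a *v h))) (at a)"
      using chain[OF f2_deriv] by simp
    then have "((\<lambda>y. 0) has_derivative
       (\<lambda>h. J21 a (xs a) *v h + J22 a (xs a) *v (Dxs a *v h))) (at a)"
      using xs_steady by simp
    moreover have "((\<lambda>y. 0) has_derivative (\<lambda>h. 0)) (at a)" by simp
    ultimately have "(\<lambda>h. J21 a (xs a) *v h + J22 a (xs a) *v (Dxs a *v h)) = (\<lambda>h. 0)"
      using has_derivative_unique by blast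
    then show ?thesis by metis
  qed
  have bDxs: "norm (Dxs a *v u) \<le> k * L2 * norm u" for a u
  proof -
    have "J22 a (xs a) *v (Dxs a *v u) = - (J21 a (xs a) *v u)" using Dxs_eq[of a u]
      by (simp add: add_eq_0_iff)
    then have "norm (Dxs a *v u) \<le> k * norm (J21 a (xs a) *v u)"
      using J22low[of "Dxs a *v u" a "xs a"] by simp
    also have "\<dots> \<le> k * (L2 * norm u)" using bJ21 kp by (simp add: mult_left_mono)
    finally show ?thesis by simp
  qed
  define Jr where "Jr a = J11 a (xs a) + J12 a (xs a) ** Dxs a" for a
  have Jrv: "Jr a *v u = J11 a (xs a) *v u + J12 a (xs a) *v (Dxs a *v u)" for a u
    by (simp add: Jr_def matrix_vector_mult_add_rdistrib matrix_vector_mul_assoc)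
  define LJ where "LJ = L1 + L1 * (k * L2)"
  have LJ0: "0 \<le> LJ" using L10 L20 kp by (simp add: LJ_def)
  have bJr: "norm (Jr a *v u) \<le> LJ * norm u" for a u
  proof -
    have "norm (Jr a *v u) \<le> norm (J11 a (xs a) *v u) + norm (J12 a (xs a) *v (Dxs a *v u))"
      by (simp add: Jrv norm_triangle_ineq)
    also have "\<dots> \<le> L1 * norm u + L1 * (k * L2 * norm u)"
      using bJ11[of a "xs a" u] bJ12[of a "xs a" "Dxs a *v u"] bDxs[of a u] L10
      by (smt (verit) mult_left_mono)
    finally show ?thesis by (simp add: LJ_def algebra_simps)
  qed
  have gap: "norm (x2 - xs x1) \<le> k * norm (f2 x1 x2)" for x1 x2
  proof -
    define d where "d = x2 - xs x1"
    define h where "h t = d \<bullet> (P2 *v f2 x1 (xs x1 + t *\<^sub>R d)) + (q2/2) * (norm d)\<^sup>2 * t" for t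
    have hder: "(h has_real_derivative (d \<bullet> (P2 *v (J22 x1 (xs x1 + t *\<^sub>R d) *v d)) + (q2/2)*(norm d)\<^sup>2)) (at t)" for t
    proof -
      have d1: "((\<lambda>t. (x1, xs x1 + t *\<^sub>R d)) has_derivative (\<lambda>s. (0, s *\<^sub>R d))) (at t)"
        by (auto intro!: derivative_eq_intros)
      have d2: "((\<lambda>t. f2 x1 (xs x1 + t *\<^sub>R d)) has_derivative (\<lambda>s. J22 x1 (xs x1 + t *\<^sub>R d) *v (s *\<^sub>R d))) (at t)"
        using has_derivative_compose[OF d1 f2_deriv[of x1 "xs x1 + t *\<^sub>R d"]] by simp
      have d3: "((\<lambda>t. d \<bullet> (P2 *v f2 x1 (xs x1 + t *\<^sub>R d))) has_derivative (\<lambda>s. d \<bullet> (P2 *v (J22 x1 (xs x1 + t *\<^sub>R d) *v (s *\<^sub>R d))))) (at t)"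
        by (rule bounded_linear.has_derivative[OF bounded_linear_inner_right
              bounded_linear.has_derivative[OF matrix_vector_mul_bounded_linear d2]])
      have d4: "((\<lambda>t. (q2/2) * (norm d)\<^sup>2 * t) has_derivative (\<lambda>s. (q2/2) * (norm d)\<^sup>2 * s)) (at t)"
        by (auto intro!: derivative_eq_intros)
      show ?thesis unfolding has_field_derivative_def h_def
        by (rule has_derivative_eq_rhs[OF has_derivative_add[OF d3 d4]])
           (simp add: fun_eq_iff matrix_vector_mult_scaleR algebra_simps)
    qed
    have hneg: "d \<bullet> (P2 *v (J22 x1 (xs x1 + t *\<^sub>R d) *v d)) + (q2/2)*(norm d)\<^sup>2 \<le> 0" for t
      using key22[of d x1 "xs x1 + t *\<^sub>R d"] q2(2)[of d] by linarith
    have "h 1 \<le> h 0"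
      using DERIV_nonpos_imp_nonincreasing[of 0 1 h] hder hneg by fastforce
    moreover have "h 0 = 0" by (simp add: h_def xs_steady)
    moreover have "h 1 = d \<bullet> (P2 *v f2 x1 x2) + (q2/2) * (norm d)\<^sup>2" by (simp add: h_def d_def)
    ultimately have "(q2/2) * (norm d)\<^sup>2 \<le> - (d \<bullet> (P2 *v f2 x1 x2))" by linarith
    also have "\<dots> \<le> norm d * (norm (f2 x1 x2) * cP2)" using CS[OF cP2(2)] by blast
    finally have "norm d * ((q2/2) * norm d) \<le> norm d * (cP2 * norm (f2 x1 x2))"
      by (simp add: power2_eq_square algebra_simps)
    then have "norm d = 0 \<or> (q2/2) * norm d \<le> cP2 * norm (f2 x1 x2)"
      by (metis mult_le_cancel_left_pos norm_ge_zero order_le_less)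
    then show ?thesis using q2(1) kp unfolding d_def
      by (auto simp: k_def field_simps)
  qed
  define mu1 where "mu1 = lambda_min P1"
  define mu2 where "mu2 = lambda_min P2"
  have mu1: "0 < mu1" and mu2: "0 < mu2" using P1f(2) P2f(2) by (auto simp: mu1_def mu2_def)
  define C where "C = cP1 * LJ * L1 * k"
  have C0: "0 \<le> C" using cP1 LJ0 L10 kp by (simp add: C_def)
  define nu where "nu = C / (sqrt mu1 * sqrt mu2) + 1"
  have nu0: "0 < nu" using C0 mu1 mu2 by (simp add: nu_def add_nonneg_pos)
  have sqle: "sqrt mu * norm x \<le> pnorm P x" if "\<And>x. mu * (norm x)\<^sup>2 \<le> x \<bullet> (P *v x)"
    "\<And>x. (pnorm P x)\<^sup>2 = x \<bullet> (P *v x)" "0 < mu" "\<And>x. 0 \<le> pnorm P x"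
    for mu and P :: "real^'m^'m" and x
  proof -
    have "sqrt mu * norm x = sqrt (mu * (norm x)\<^sup>2)" by (simp add: real_sqrt_mult)
    also have "\<dots> \<le> sqrt ((pnorm P x)\<^sup>2)" using that(1)[of x] that(2)[of x] by simp
    also have "\<dots> = pnorm P x" using that(4)[of x] by simp
    finally show ?thesis .
  qed
  have pn1: "0 \<le> pnorm P1 x" for x
  proof -
    have "0 \<le> lambda_min P1 * (norm x)\<^sup>2" using P1f(2) by simp
    then have "0 \<le> x \<bullet> (P1 *v x)" using P1f(4)[of x] by linarith
    then show ?thesis by (simp add: pnorm_def)
  qed
  have pn2: "0 \<le> pnorm P2 x" for x
  proof -
    have "0 \<le> lambda_min P2 * (norm x)\<^sup>2" using P2f(2) by simp
    then have "0 \<le> x \<bullet> (P2 *v x)" using P2f(4)[of x] by linarith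
    then show ?thesis by (simp add: pnorm_def)
  qed
  show ?thesis
  proof (intro exI[of _ nu] conjI allI impI nu0)
    fix \<theta> :: real and x1 x2 D
    assume th: "\<theta> > 0"
      and hD: "((\<lambda>p. (pnorm P1 (f1 (fst p) (xs (fst p))))\<^sup>2 + \<theta> * (pnorm P2 (f2 (fst p) (snd p)))\<^sup>2)
              has_derivative D) (at (x1, x2))"
    define z where "z = f1 x1 (xs x1)"
    define y where "y = f2 x1 x2"
    define w where "w = f1 x1 x2"
    define a where "a = pnorm P2 y"
    define b where "b = pnorm P1 z"
    have fd: "((\<lambda>p. fst p) has_derivative (\<lambda>h. fst h)) (at (x1, x2))"
      by (intro has_derivative_fst has_derivative_ident)
    have "((\<lambda>y. f1 y (xs y)) has_derivative (\<lambda>h. Jr x1 *v h)) (at x1)"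
      using chain[OF f1_deriv, of x1] by (simp add: Jrv)
    then have "((\<lambda>y. f1 y (xs y)) has_derivative (\<lambda>h. Jr x1 *v h)) (at (fst (x1, x2)))" by simp
    from has_derivative_compose[OF fd this]
    have dz: "((\<lambda>p. f1 (fst p) (xs (fst p))) has_derivative (\<lambda>h. Jr x1 *v fst h)) (at (x1, x2))"
      by simp
    have dy: "((\<lambda>p. f2 (fst p) (snd p)) has_derivative
              (\<lambda>h. J21 x1 x2 *v fst h + J22 x1 x2 *v snd h)) (at (x1, x2))" by (rule f2_deriv)
    have e1: "((\<lambda>p. f1 (fst p) (xs (fst p)) \<bullet> (P1 *v f1 (fst p) (xs (fst p)))) has_derivative
        (\<lambda>h. z \<bullet> (P1 *v (Jr x1 *v fst h)) + (Jr x1 *v fst h) \<bullet> (P1 *v z))) (at (x1, x2))"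
      unfolding z_def
      using has_derivative_inner[OF dz bounded_linear.has_derivative[OF matrix_vector_mul_bounded_linear dz]]
      by simp
    have e2: "((\<lambda>p. f2 (fst p) (snd p) \<bullet> (P2 *v f2 (fst p) (snd p))) has_derivative
        (\<lambda>h. y \<bullet> (P2 *v (J21 x1 x2 *v fst h + J22 x1 x2 *v snd h))
            + (J21 x1 x2 *v fst h + J22 x1 x2 *v snd h) \<bullet> (P2 *v y))) (at (x1, x2))"
      unfolding y_def
      using has_derivative_inner[OF dy bounded_linear.has_derivative[OF matrix_vector_mul_bounded_linear dy]]
      by simp
    have dV: "((\<lambda>p. f1 (fst p) (xs (fst p)) \<bullet> (P1 *v f1 (fst p) (xs (fst p)))
        + \<theta> * (f2 (fst p) (snd p) \<bullet> (P2 *v f2 (fst p) (snd p)))) has_derivative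
        (\<lambda>h. (z \<bullet> (P1 *v (Jr x1 *v fst h)) + (Jr x1 *v fst h) \<bullet> (P1 *v z))
           + \<theta> * (y \<bullet> (P2 *v (J21 x1 x2 *v fst h + J22 x1 x2 *v snd h))
            + (J21 x1 x2 *v fst h + J22 x1 x2 *v snd h) \<bullet> (P2 *v y)))) (at (x1, x2))"
      by (rule has_derivative_add[OF e1 has_derivative_mult_right[OF e2]])
    have "(\<lambda>p. (pnorm P1 (f1 (fst p) (xs (fst p))))\<^sup>2 + \<theta> * (pnorm P2 (f2 (fst p) (snd p)))\<^sup>2)
       = (\<lambda>p. f1 (fst p) (xs (fst p)) \<bullet> (P1 *v f1 (fst p) (xs (fst p)))
        + \<theta> * (f2 (fst p) (snd p) \<bullet> (P2 *v f2 (fst p) (snd p))))"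
      by (simp add: P1f(6) P2f(6))
    with hD have hD': "((\<lambda>p. f1 (fst p) (xs (fst p)) \<bullet> (P1 *v f1 (fst p) (xs (fst p)))
        + \<theta> * (f2 (fst p) (snd p) \<bullet> (P2 *v f2 (fst p) (snd p)))) has_derivative D) (at (x1, x2))"
      by simp
    have Deq: "D = (\<lambda>h. (z \<bullet> (P1 *v (Jr x1 *v fst h)) + (Jr x1 *v fst h) \<bullet> (P1 *v z))
           + \<theta> * (y \<bullet> (P2 *v (J21 x1 x2 *v fst h + J22 x1 x2 *v snd h))
            + (J21 x1 x2 *v fst h + J22 x1 x2 *v snd h) \<bullet> (P2 *v y)))"
      using has_derivative_unique[OF hD' dV] .
    have inv: "J22 x1 x2 ** matrix_inv (J22 x1 x2) = mat 1"
      using J22_inv[of x1 x2] unfolding invertible_def matrix_inv_def by (rule someI2_ex) auto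
    have G: "J21 x1 x2 *v w + J22 x1 x2 *v (y + ((- matrix_inv (J22 x1 x2)) ** J21 x1 x2) *v w)
        = J22 x1 x2 *v y"
    proof -
      have "J22 x1 x2 *v (((- matrix_inv (J22 x1 x2)) ** J21 x1 x2) *v w)
          = - (J22 x1 x2 *v (matrix_inv (J22 x1 x2) *v (J21 x1 x2 *v w)))"
        by (simp add: neg_mv mv_neg_right flip: matrix_vector_mul_assoc)
      also have "\<dots> = - (J21 x1 x2 *v w)" by (simp add: matrix_vector_mul_assoc matrix_mul_assoc inv)
      finally show ?thesis by (simp add: matrix_vector_right_distrib)
    qed
    have DF: "D (f1 x1 x2, f2 x1 x2 + ((- matrix_inv (J22 x1 x2)) ** J21 x1 x2) *v f1 x1 x2)
       = 2 * (z \<bullet> (P1 *v (Jr x1 *v w))) + \<theta> * (2 * (y \<bullet> (P2 *v (J22 x1 x2 *v y))))"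
    proof -
      have s1: "(Jr x1 *v w) \<bullet> (P1 *v z) = z \<bullet> (P1 *v (Jr x1 *v w))" by (rule sym_dot[OF P1f(1)])
      have s2: "(J22 x1 x2 *v y) \<bullet> (P2 *v y) = y \<bullet> (P2 *v (J22 x1 x2 *v y))" by (rule sym_dot[OF P2f(1)])
      show ?thesis unfolding Deq using G s1 s2 by (simp add: w_def[symmetric] y_def[symmetric])
    qed
    have T1: "2 * (z \<bullet> (P1 *v (Jr x1 *v z))) \<le> - (z \<bullet> (Q1 *v z))"
      using LMI1[of x1] quad_form[OF P1f(1), where J="Jr x1" and v=z] unfolding loewner_le_def Jr_def
      by (metis neg_mv inner_minus_right)
    have T2: "2 * (y \<bullet> (P2 *v (J22 x1 x2 *v y))) \<le> - (y \<bullet> (Q2 *v y))" by (rule key22)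
    have nz: "sqrt mu1 * norm z \<le> b" unfolding b_def mu1_def
      by (rule sqle[OF P1f(4) P1f(6) P1f(2) pn1])
    have ny: "sqrt mu2 * norm y \<le> a" unfolding a_def mu2_def
      by (rule sqle[OF P2f(4) P2f(6) P2f(2) pn2])
    have a0: "0 \<le> a" and b0: "0 \<le> b" by (simp_all add: a_def b_def pn1 pn2)
    have Delta: "norm (w - z) \<le> L1 * (k * norm y)"
    proof -
      have "norm (w - z) \<le> L1 * dist (x1, x2) (x1, xs x1)"
        using lipschitz_onD[OF L1, of "(x1, x2)" "(x1, xs x1)"] by (simp add: w_def z_def dist_norm)
      also have "dist (x1, x2) (x1, xs x1) = norm (x2 - xs x1)" by (simp add: dist_Pair_Pair dist_norm)
      also have "L1 * norm (x2 - xs x1) \<le> L1 * (k * norm y)"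
        using gap[of x2 x1] L10 by (simp add: y_def mult_left_mono)
      finally show ?thesis .
    qed
    have T3: "2 * (z \<bullet> (P1 *v (Jr x1 *v (w - z)))) \<le> 2 * nu * a * b"
    proof -
      have "z \<bullet> (P1 *v (Jr x1 *v (w - z))) \<le> norm z * norm (P1 *v (Jr x1 *v (w - z)))"
        using Cauchy_Schwarz_ineq2[of z "P1 *v (Jr x1 *v (w - z))"] by linarith
      also have "\<dots> \<le> norm z * (norm (Jr x1 *v (w - z)) * cP1)"
        using cP1(2) by (simp add: mult_left_mono)
      also have "\<dots> \<le> norm z * ((LJ * norm (w - z)) * cP1)"
        using bJr[of x1 "w - z"] cP1(1) by (simp add: mult_left_mono mult_right_mono)
      also have "\<dots> \<le> norm z * ((LJ * (L1 * (k * norm y))) * cP1)"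
        using Delta LJ0 cP1(1) by (simp add: mult_left_mono mult_right_mono)
      also have "\<dots> = (C / (sqrt mu1 * sqrt mu2)) * (sqrt mu1 * norm z) * (sqrt mu2 * norm y)"
        using mu1 mu2 by (simp add: C_def field_simps)
      also have "\<dots> \<le> (C / (sqrt mu1 * sqrt mu2)) * b * a"
        using C0 mu1 mu2 nz ny a0 b0
        by (intro mult_mono) (auto intro!: divide_nonneg_pos mult_nonneg_nonneg)
      also have "\<dots> \<le> nu * a * b"
        using a0 b0 by (simp add: nu_def algebra_simps)
      finally show ?thesis by simp
    qed
    have zQ: "lambda_min Q1 / norm2_spd P1 * b\<^sup>2 \<le> z \<bullet> (Q1 *v z)"
    proof -
      have "b\<^sup>2 \<le> lambda_max P1 * (norm z)\<^sup>2" using P1f(5)[of z] P1f(6)[of z] by (simp add: b_def)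
      then have "lambda_min Q1 / lambda_max P1 * b\<^sup>2 \<le> lambda_min Q1 / lambda_max P1 * (lambda_max P1 * (norm z)\<^sup>2)"
        using Q1f(2) P1f(2) P1f(3) by (intro mult_left_mono) auto
      also have "\<dots> = lambda_min Q1 * (norm z)\<^sup>2" using P1f(2) P1f(3) by simp
      also have "\<dots> \<le> z \<bullet> (Q1 *v z)" by (rule Q1f(4))
      finally show ?thesis by (simp add: norm2_spd_def)
    qed
    have yQ: "lambda_min Q2 / norm2_spd P2 * a\<^sup>2 \<le> y \<bullet> (Q2 *v y)"
    proof -
      have "a\<^sup>2 \<le> lambda_max P2 * (norm y)\<^sup>2" using P2f(5)[of y] P2f(6)[of y] by (simp add: a_def)
      then have "lambda_min Q2 / lambda_max P2 * a\<^sup>2 \<le> lambda_min Q2 / lambda_max P2 * (lambda_max P2 * (norm y)\<^sup>2)"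
        using Q2f(2) P2f(2) P2f(3) by (intro mult_left_mono) auto
      also have "\<dots> = lambda_min Q2 * (norm y)\<^sup>2" using P2f(2) P2f(3) by simp
      also have "\<dots> \<le> y \<bullet> (Q2 *v y)" by (rule Q2f(4))
      finally show ?thesis by (simp add: norm2_spd_def)
    qed
    have split: "z \<bullet> (P1 *v (Jr x1 *v w)) = z \<bullet> (P1 *v (Jr x1 *v z)) + z \<bullet> (P1 *v (Jr x1 *v (w - z)))"
      by (simp add: matrix_vector_right_distrib matrix_vector_mult_diff_distrib inner_diff_right inner_add_right)
    have thm2: "\<theta> * (2 * (y \<bullet> (P2 *v (J22 x1 x2 *v y)))) \<le> - (\<theta> * lambda_min Q2 / norm2_spd P2 * a\<^sup>2)"
    proof -
      have "\<theta> * (2 * (y \<bullet> (P2 *v (J22 x1 x2 *v y)))) \<le> \<theta> * (- (lambda_min Q2 / norm2_spd P2 * a\<^sup>2))"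
        using T2 yQ th by (intro mult_left_mono) auto
      then show ?thesis by simp
    qed
    show "D (f1 x1 x2, f2 x1 x2 + ((- matrix_inv (J22 x1 x2)) ** J21 x1 x2) *v f1 x1 x2)
           \<le> - (let a = pnorm P2 (f2 x1 x2); b = pnorm P1 (f1 x1 (xs x1)) in
                  (\<theta> * lambda_min Q2 / norm2_spd P2) * a\<^sup>2 - 2 * nu * a * b
                  + (lambda_min Q1 / norm2_spd P1) * b\<^sup>2)"
      using DF T1 T3 zQ thm2 split
      unfolding Let_def a_def[symmetric] b_def[symmetric] y_def[symmetric] z_def[symmetric] w_def[symmetric]
      by linarith
  qed
qed
end
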